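(* Let $\Gamma$ be a weighted digraph with vertex set $\{1,\dots,n\}$, $n>1$, without loops and with strictly positive arc weights, with Laplacian matrix $L$. Let $\lambda_i\neq0$ be an eigenvalue of $L$. Then every nonzero column of $Q(-\lambda_i^{-1})$ is an eigenvector of $L$ corresponding to $\lambda_i$.
   Context: $W=(w_{ij})$ is the matrix of arc weights ($w_{ij}>0$ iff there is an arc $i\to j$, else $0$). The Laplacian $L=(\ell_{ij})$: $\ell_{ij}=-w_{ij}$ for $j\ne i$, $\ell_{ii}=\sum_{k\ne i}w_{ik}$. The weight of a subgraph is the product of its arc weights (1 if no arcs); the weight of a set of subgraphs is the sum of their weights (0 for the empty set). A converging tree is a weakly connected digraph with one vertex (the root) of outdegree 0 and all others of outdegree 1; an in-forest is a spanning subgraph of $\Gamma$ whose weak components are converging trees. $Q_k=(q^k_{ij})$ where $q^k_{ij}$ is the total weight of in-forests with $k$ arcs in which $i$ lies in a tree rooted at $j$, and for $\tau\in\mathbb C$, $Q(\tau)=\sum_{k\ge0}Q_k\tau^k$ (a finite sum). *)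

theory Defs
  imports Complex_Main "Jordan_Normal_Form.Char_Poly"
begin

(* Vertices are 0..<n (the paper's 1..n shifted by one).
   w :: nat => nat => real is the weight matrix; there is an arc i -> j iff w i j > 0. *)

definition arcs :: "nat \<Rightarrow> (nat \<Rightarrow> nat \<Rightarrow> real) \<Rightarrow> (nat \<times> nat) set" where
  "arcs n w = {(i,j). i < n \<and> j < n \<and> w i j > 0}"

definition laplacian :: "nat \<Rightarrow> (nat \<Rightarrow> nat \<Rightarrow> real) \<Rightarrow> complex mat" where
  "laplacian n w = mat n n (\<lambda>(i,j). if i = j then complex_of_real (\<Sum>k\<in>{0..<n}-{i}. w i k)
                                     else - complex_of_real (w i j))"

definition sg_weight :: "(nat \<Rightarrow> nat \<Rightarrow> real) \<Rightarrow> (nat \<times> nat) set \<Rightarrow> real" where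
  "sg_weight w F = (\<Prod>(i,j)\<in>F. w i j)"

definition outdeg :: "(nat \<times> nat) set \<Rightarrow> nat \<Rightarrow> nat" where
  "outdeg F v = card {u. (v,u) \<in> F}"

definition weakly_conn :: "nat \<Rightarrow> (nat \<times> nat) set \<Rightarrow> nat \<Rightarrow> nat \<Rightarrow> bool" where
  "weakly_conn n F u v \<longleftrightarrow> u < n \<and> v < n \<and> (u, v) \<in> (F \<union> F\<inverse>)\<^sup>*"

definition weak_comp :: "nat \<Rightarrow> (nat \<times> nat) set \<Rightarrow> nat \<Rightarrow> nat set" where
  "weak_comp n F v = {u. weakly_conn n F v u}"

(* A weak component C (with the arcs of F inside it) is a converging tree:
   it is weakly connected by construction; exactly one vertex (the root) has outdegree 0,
   all the others have outdegree 1. *)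
definition converging_tree_comp :: "(nat \<times> nat) set \<Rightarrow> nat set \<Rightarrow> bool" where
  "converging_tree_comp F C \<longleftrightarrow>
     (\<exists>!r. r \<in> C \<and> outdeg F r = 0) \<and> (\<forall>v\<in>C. outdeg F v = 0 \<or> outdeg F v = 1)"

definition in_forest :: "nat \<Rightarrow> (nat \<Rightarrow> nat \<Rightarrow> real) \<Rightarrow> (nat \<times> nat) set \<Rightarrow> bool" where
  "in_forest n w F \<longleftrightarrow> F \<subseteq> arcs n w \<and>
     (\<forall>v<n. converging_tree_comp F (weak_comp n F v))"

definition in_tree_rooted_at :: "nat \<Rightarrow> (nat \<times> nat) set \<Rightarrow> nat \<Rightarrow> nat \<Rightarrow> bool" where
  "in_tree_rooted_at n F i j \<longleftrightarrow> weakly_conn n F i j \<and> outdeg F j = 0"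

definition qk :: "nat \<Rightarrow> (nat \<Rightarrow> nat \<Rightarrow> real) \<Rightarrow> nat \<Rightarrow> nat \<Rightarrow> nat \<Rightarrow> real" where
  "qk n w k i j = (\<Sum>F\<in>{F. in_forest n w F \<and> card F = k \<and> in_tree_rooted_at n F i j}. sg_weight w F)"

definition Qk_mat :: "nat \<Rightarrow> (nat \<Rightarrow> nat \<Rightarrow> real) \<Rightarrow> nat \<Rightarrow> complex mat" where
  "Qk_mat n w k = mat n n (\<lambda>(i,j). complex_of_real (qk n w k i j))"

(* Q(tau) = sum_k Q_k tau^k; every in-forest has at most n-1 arcs, so k \<le> n suffices *)
definition Q_tau :: "nat \<Rightarrow> (nat \<Rightarrow> nat \<Rightarrow> real) \<Rightarrow> complex \<Rightarrow> complex mat" where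
  "Q_tau n w \<tau> = mat n n (\<lambda>(i,j). \<Sum>k\<le>n. complex_of_real (qk n w k i j) * \<tau> ^ k)"

end

theory Submission
  imports Defs
begin


definition sinkF :: "(nat \<times> nat) set \<Rightarrow> nat \<Rightarrow> bool" where
  "sinkF F v \<longleftrightarrow> (\<forall>u. (v,u) \<notin> F)"

definition functionalF :: "(nat \<times> nat) set \<Rightarrow> bool" where
  "functionalF F \<longleftrightarrow> (\<forall>a b c. (a,b) \<in> F \<longrightarrow> (a,c) \<in> F \<longrightarrow> b = c)"

definition rt :: "(nat \<times> nat) set \<Rightarrow> nat \<Rightarrow> nat" where
  "rt F v = (THE r. (v,r) \<in> F\<^sup>* \<and> sinkF F r)"

definition par :: "(nat \<times> nat) set \<Rightarrow> nat \<Rightarrow> nat" where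
  "par F v = (THE u. (v,u) \<in> F)"

definition forest2 :: "nat \<Rightarrow> (nat \<Rightarrow> nat \<Rightarrow> real) \<Rightarrow> (nat \<times> nat) set \<Rightarrow> bool" where
  "forest2 n w F \<longleftrightarrow> F \<subseteq> arcs n w \<and> functionalF F \<and> (\<forall>v. \<exists>r. (v,r) \<in> F\<^sup>* \<and> sinkF F r)"

lemma step_unique:
  assumes "functionalF F" "(a,b) \<in> F\<^sup>*" "a \<noteq> b" "(a,c) \<in> F"
  shows "(c,b) \<in> F\<^sup>*"
  using assms(2,3)
proof (cases rule: converse_rtranclE)
  case (step y)
  then have "y = c" using assms(1,4) unfolding functionalF_def by blast
  then show ?thesis using step by simp
qed (use assms in auto)

lemma comparable:
  assumes "functionalF F" "(v,a) \<in> F\<^sup>*" "(v,b) \<in> F\<^sup>*"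
  shows "(a,b) \<in> F\<^sup>* \<or> (b,a) \<in> F\<^sup>*"
  using assms(2)
proof (induction rule: rtrancl_induct)
  case base
  then show ?case using assms(3) by simp
next
  case (step y z)
  from step(3) show ?case
  proof
    assume "(y,b) \<in> F\<^sup>*"
    then show ?thesis
    proof (cases "y = b")
      case True then show ?thesis using step by auto
    next
      case False then show ?thesis using step_unique[OF assms(1) \<open>(y,b) \<in> F\<^sup>*\<close> False step(2)] by simp
    qed
  next
    assume "(b,y) \<in> F\<^sup>*"
    then show ?thesis using step(2) by (meson rtrancl.rtrancl_into_rtrancl)
  qed
qed

lemma sink_reach: "sinkF F a \<Longrightarrow> (a,b) \<in> F\<^sup>* \<Longrightarrow> b = a"
  by (erule converse_rtranclE) (auto simp: sinkF_def)

lemma sink_unique: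
  assumes "functionalF F" "(v,r) \<in> F\<^sup>*" "sinkF F r" "(v,s) \<in> F\<^sup>*" "sinkF F s"
  shows "r = s"
  using comparable[OF assms(1,2,4)] sink_reach assms(3,5) by metis

lemma rt_eq:
  assumes "functionalF F" "(v,r) \<in> F\<^sup>*" "sinkF F r"
  shows "rt F v = r"
  unfolding rt_def using assms sink_unique by (intro the_equality) blast+

lemma rt_prop:
  assumes "forest2 n w F"
  shows "(v, rt F v) \<in> F\<^sup>* \<and> sinkF F (rt F v)"
proof -
  obtain r where r: "(v,r) \<in> F\<^sup>*" "sinkF F r" using assms unfolding forest2_def by blast
  then show ?thesis using rt_eq[OF _ r] assms unfolding forest2_def by auto
qed

lemma forest2_functional: "forest2 n w F \<Longrightarrow> functionalF F"
  unfolding forest2_def by simp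

lemma rt_sink: "functionalF F \<Longrightarrow> sinkF F v \<Longrightarrow> rt F v = v"
  by (rule rt_eq) auto

lemma rt_step:
  assumes "forest2 n w F" "(a,b) \<in> F"
  shows "rt F a = rt F b"
proof -
  have "(a, rt F b) \<in> F\<^sup>*" using rt_prop[OF assms(1), of b] assms(2)
    by (meson converse_rtrancl_into_rtrancl)
  then show ?thesis using rt_eq forest2_functional[OF assms(1)] rt_prop[OF assms(1), of b] by blast
qed

lemma rt_weak:
  assumes "forest2 n w F" "(a,b) \<in> (F \<union> F\<inverse>)\<^sup>*"
  shows "rt F a = rt F b"
  using assms(2)
proof (induction rule: rtrancl_induct)
  case (step y z)
  then show ?case using rt_step[OF assms(1)] by auto
qed simp

lemma arcs_lt: "(a,b) \<in> arcs n w \<Longrightarrow> a < n \<and> b < n"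
  unfolding arcs_def by auto

lemma reach_lt:
  assumes "F \<subseteq> arcs n w" "(v,r) \<in> F\<^sup>*" "v < n"
  shows "r < n"
  using assms(2,3) by (induction rule: rtrancl_induct) (use assms(1) arcs_lt in blast)+

lemma finite_arcs: "finite (arcs n w)"
  by (rule finite_subset[of _ "{0..<n} \<times> {0..<n}"]) (auto simp: arcs_def)

lemma finite_forest: "F \<subseteq> arcs n w \<Longrightarrow> finite F"
  using finite_arcs finite_subset by blast

lemma outdeg0_iff: "finite F \<Longrightarrow> outdeg F v = 0 \<longleftrightarrow> sinkF F v"
proof -
  assume "finite F"
  then have "finite {u. (v,u) \<in> F}"
    by (rule finite_subset[rotated, OF finite_imageI[of F snd]]) force
  then show ?thesis unfolding outdeg_def sinkF_def by auto
qed

lemma in_forest_iff: "in_forest n w F \<longleftrightarrow> forest2 n w F"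
proof
  assume H: "in_forest n w F"
  have sub: "F \<subseteq> arcs n w" using H unfolding in_forest_def by simp
  have fin: "finite F" using finite_forest[OF sub] .
  have finv: "finite {u. (v,u) \<in> F}" for v
    by (rule finite_subset[rotated, OF finite_imageI[of F snd]]) (use fin in force)+
  have comp: "converging_tree_comp F (weak_comp n F v)" if "v < n" for v
    using H that unfolding in_forest_def by simp
  have func: "functionalF F"
    unfolding functionalF_def
  proof (intro allI impI)
    fix a b c assume ab: "(a,b) \<in> F" and ac: "(a,c) \<in> F"
    have a: "a < n" using sub ab arcs_lt by blast
    have "a \<in> weak_comp n F a" using a unfolding weak_comp_def weakly_conn_def by simp
    then have "outdeg F a = 0 \<or> outdeg F a = 1"
      using comp[OF a] unfolding converging_tree_comp_def by blast
    moreover have "outdeg F a \<noteq> 0" using ab finv[of a] unfolding outdeg_def by auto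
    ultimately have "card {u. (a,u) \<in> F} = 1" unfolding outdeg_def by simp
    then obtain x where "{u. (a,u) \<in> F} = {x}" using card_1_singletonE by blast
    then show "b = c" using ab ac by (metis (mono_tags, lifting) mem_Collect_eq singletonD)
  qed
  have reach: "\<exists>r. (v,r) \<in> F\<^sup>* \<and> sinkF F r" for v
  proof (cases "v < n")
    case False
    then have "sinkF F v" using sub arcs_lt unfolding sinkF_def by blast
    then show ?thesis by blast
  next
    case True
    obtain r where r: "r \<in> weak_comp n F v" "outdeg F r = 0"
      using comp[OF True] unfolding converging_tree_comp_def by blast
    have rs: "sinkF F r" using r(2) outdeg0_iff[OF fin] by simp
    have vr: "(v,r) \<in> (F \<union> F\<inverse>)\<^sup>*" using r(1) unfolding weak_comp_def weakly_conn_def by simp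
    show ?thesis using vr
    proof (induction rule: converse_rtrancl_induct)
      case base
      then show ?case using rs by blast
    next
      case (step y z)
      then obtain s where s: "(z,s) \<in> F\<^sup>*" "sinkF F s" by blast
      from step(1) show ?case
      proof
        assume "(y,z) \<in> F" then show ?thesis using s by (meson converse_rtrancl_into_rtrancl)
      next
        assume "(y,z) \<in> F\<inverse>"
        then have zy: "(z,y) \<in> F" by simp
        then have "z \<noteq> s" using s(2) unfolding sinkF_def by blast
        then have "(y,s) \<in> F\<^sup>*" using step_unique[OF func s(1) _ zy] by simp
        then show ?thesis using s(2) by blast
      qed
    qed
  qed
  show "forest2 n w F" unfolding forest2_def using sub func reach by blast
next
  assume H: "forest2 n w F"
  have sub: "F \<subseteq> arcs n w" using H unfolding forest2_def by simp
  have fin: "finite F" using finite_forest[OF sub] .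
  have func: "functionalF F" using H unfolding forest2_def by simp
  have "converging_tree_comp F (weak_comp n F v)" if v: "v < n" for v
    unfolding converging_tree_comp_def
  proof (intro conjI ballI)
    have rp: "(v, rt F v) \<in> F\<^sup>*" "sinkF F (rt F v)" using rt_prop[OF H] by auto
    have "rt F v < n" using reach_lt[OF sub rp(1) v] .
    moreover have "(v, rt F v) \<in> (F \<union> F\<inverse>)\<^sup>*" using rp(1) rtrancl_mono[of F "F \<union> F\<inverse>"] by blast
    ultimately have 1: "rt F v \<in> weak_comp n F v \<and> outdeg F (rt F v) = 0"
      using v rp(2) outdeg0_iff[OF fin] unfolding weak_comp_def weakly_conn_def by simp
    have 2: "r = rt F v" if "r \<in> weak_comp n F v \<and> outdeg F r = 0" for r
    proof -
      have "(v,r) \<in> (F \<union> F\<inverse>)\<^sup>*" "sinkF F r"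
        using that outdeg0_iff[OF fin] unfolding weak_comp_def weakly_conn_def by auto
      then show "r = rt F v" using rt_weak[OF H] rt_sink[OF func] by metis
    qed
    show "\<exists>!r. r \<in> weak_comp n F v \<and> outdeg F r = 0" using 1 2 by blast
  next
    fix u assume "u \<in> weak_comp n F v"
    have "card {x. (u,x) \<in> F} \<le> 1"
      using func unfolding functionalF_def
      by (cases "finite {x. (u,x) \<in> F}") (auto simp: card_le_Suc0_iff_eq)
    then show "outdeg F u = 0 \<or> outdeg F u = 1" unfolding outdeg_def by linarith
  qed
  then show "in_forest n w F" unfolding in_forest_def using sub by simp
qed

lemma in_tree_iff:
  assumes "forest2 n w F"
  shows "in_tree_rooted_at n F i j \<longleftrightarrow> i < n \<and> rt F i = j"
proof -
  have sub: "F \<subseteq> arcs n w" using assms unfolding forest2_def by simp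
  have fin: "finite F" using finite_forest[OF sub] .
  have func: "functionalF F" using assms unfolding forest2_def by simp
  show ?thesis
  proof
    assume "in_tree_rooted_at n F i j"
    then have "i < n" "(i,j) \<in> (F \<union> F\<inverse>)\<^sup>*" "sinkF F j"
      using outdeg0_iff[OF fin] unfolding in_tree_rooted_at_def weakly_conn_def by auto
    then show "i < n \<and> rt F i = j" using rt_weak[OF assms] rt_sink[OF func] by metis
  next
    assume h: "i < n \<and> rt F i = j"
    have rp: "(i, j) \<in> F\<^sup>*" "sinkF F j" using rt_prop[OF assms, of i] h by auto
    have "j < n" using reach_lt[OF sub rp(1)] h by simp
    moreover have "(i, j) \<in> (F \<union> F\<inverse>)\<^sup>*" using rp(1) rtrancl_mono[of F "F \<union> F\<inverse>"] by blast
    ultimately show "in_tree_rooted_at n F i j"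
      using h rp(2) outdeg0_iff[OF fin] unfolding in_tree_rooted_at_def weakly_conn_def by simp
  qed
qed


lemma add_arc:
  assumes H: "forest2 n w F" and si: "sinkF F i" and a: "(i,m) \<in> arcs n w" and r: "rt F m \<noteq> i"
  defines "G \<equiv> insert (i,m) F"
  shows "forest2 n w G \<and> rt G i = rt F m \<and> (\<forall>u. rt F u \<noteq> i \<longrightarrow> rt G u = rt F u)
    \<and> (\<forall>u. rt F u = i \<longrightarrow> rt G u = rt F m)"
proof -
  have func: "functionalF F" using H unfolding forest2_def by simp
  have funcG: "functionalF G" using func si unfolding functionalF_def sinkF_def G_def by auto
  have subG: "G \<subseteq> arcs n w" using H a unfolding forest2_def G_def by auto
  have sinkG: "sinkF G x \<longleftrightarrow> sinkF F x \<and> x \<noteq> i" for x unfolding sinkF_def G_def by auto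
  have mono: "F\<^sup>* \<subseteq> G\<^sup>*" unfolding G_def by (rule rtrancl_mono) auto
  have c1: "(u, rt F u) \<in> G\<^sup>* \<and> sinkF G (rt F u)" if "rt F u \<noteq> i" for u
    using rt_prop[OF H, of u] mono that sinkG by auto
  have c2: "(u, rt F m) \<in> G\<^sup>* \<and> sinkF G (rt F m)" if "rt F u = i" for u
  proof -
    have "(u,i) \<in> G\<^sup>*" using rt_prop[OF H, of u] mono that by auto
    moreover have "(i,m) \<in> G" unfolding G_def by simp
    ultimately have "(u,m) \<in> G\<^sup>*" by simp
    then show ?thesis using c1[OF r] by (meson rtrancl_trans)
  qed
  have "forest2 n w G" unfolding forest2_def using subG funcG c1 c2 by blast
  moreover have "rt G i = rt F m" using c2[of i] rt_sink[OF func si] rt_eq[OF funcG] by auto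
  moreover have "\<forall>u. rt F u \<noteq> i \<longrightarrow> rt G u = rt F u" using c1 rt_eq[OF funcG] by blast
  moreover have "\<forall>u. rt F u = i \<longrightarrow> rt G u = rt F m" using c2 rt_eq[OF funcG] by blast
  ultimately show ?thesis by blast
qed

lemma remove_reach:
  assumes "(v,r) \<in> G\<^sup>*"
  shows "(v,r) \<in> (G - {(i,m)})\<^sup>* \<or> (v,i) \<in> (G - {(i,m)})\<^sup>*"
  using assms
proof (induction rule: rtrancl_induct)
  case (step y z)
  show ?case
  proof (cases "(y,z) = (i,m)")
    case True
    then show ?thesis using step(3) by auto
  next
    case False
    then have "(y,z) \<in> G - {(i,m)}" using step(2) by simp
    then show ?thesis using step(3) by (meson rtrancl.rtrancl_into_rtrancl)
  qed
qed simp

lemma cycle_closed: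
  assumes func: "functionalF G" and im: "(i,m) \<in> G" and mi: "(m,i) \<in> G\<^sup>*" and iu: "(i,u) \<in> G\<^sup>*"
  shows "(u,i) \<in> G\<^sup>*"
  using iu
proof (induction rule: rtrancl_induct)
  case (step y z)
  show ?case
  proof (cases "y = i")
    case True
    then have "z = m" using step(2) im func unfolding functionalF_def by blast
    then show ?thesis using mi by simp
  next
    case False
    then show ?thesis using step_unique[OF func step(3) False step(2)] by simp
  qed
qed simp

lemma remove_arc:
  assumes H: "forest2 n w G" and im: "(i,m) \<in> G"
  defines "F \<equiv> G - {(i,m)}"
  shows "forest2 n w F \<and> sinkF F i \<and> rt F m \<noteq> i"
proof -
  have func: "functionalF G" using H unfolding forest2_def by simp
  have funcF: "functionalF F" using func unfolding functionalF_def F_def by auto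
  have subF: "F \<subseteq> arcs n w" using H unfolding forest2_def F_def by auto
  have si: "sinkF F i" using func im unfolding functionalF_def sinkF_def F_def by auto
  have reach: "\<exists>r. (v,r) \<in> F\<^sup>* \<and> sinkF F r" for v
  proof -
    have rp: "(v, rt G v) \<in> G\<^sup>*" "sinkF G (rt G v)" using rt_prop[OF H] by auto
    have "sinkF F (rt G v)" using rp(2) unfolding sinkF_def F_def by auto
    then show ?thesis using remove_reach[OF rp(1), of i m] si unfolding F_def by blast
  qed
  have fF: "forest2 n w F" unfolding forest2_def using subF funcF reach by blast
  have "rt F m \<noteq> i"
  proof
    assume "rt F m = i"
    then have "(m,i) \<in> F\<^sup>*" using rt_prop[OF fF, of m] by simp
    then have mi: "(m,i) \<in> G\<^sup>*" using rtrancl_mono[of F G] unfolding F_def by blast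
    have "(i, rt G i) \<in> G\<^sup>*" using rt_prop[OF H] by simp
    then have "(rt G i, i) \<in> G\<^sup>*" using cycle_closed[OF func im mi] by simp
    then have "i = rt G i" using sink_reach rt_prop[OF H, of i] by metis
    then have "sinkF G i" using rt_prop[OF H, of i] by simp
    then show False using im unfolding sinkF_def by blast
  qed
  then show ?thesis using fF si by blast
qed

lemma par_eq: "functionalF F \<Longrightarrow> (v,u) \<in> F \<Longrightarrow> par F v = u"
  unfolding par_def functionalF_def by blast

lemma par_in: "functionalF F \<Longrightarrow> \<not> sinkF F v \<Longrightarrow> (v, par F v) \<in> F"
  using par_eq unfolding sinkF_def by blast

lemma card_forest:
  assumes H: "forest2 n w F"
  shows "card F \<le> n"
proof -
  have sub: "F \<subseteq> arcs n w" using H unfolding forest2_def by simp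
  have func: "functionalF F" using H unfolding forest2_def by simp
  have "inj_on fst F" using func unfolding inj_on_def functionalF_def by auto
  then have "card F = card (fst ` F)" by (simp add: card_image)
  also have "\<dots> \<le> card {0..<n}" using sub arcs_lt by (intro card_mono) force+
  finally show ?thesis by simp
qed



lemma sum_invol_zero:
  assumes "\<And>x. x \<in> S \<Longrightarrow> g x \<in> S" "\<And>x. x \<in> S \<Longrightarrow> g (g x) = x"
    "\<And>x. x \<in> S \<Longrightarrow> f (g x) = - f x"
  shows "sum f S = (0::real)"
proof -
  have "sum f S = sum (\<lambda>x. - f x) S"
    by (rule sum.reindex_bij_witness[of S g g S]) (use assms in auto)
  then show ?thesis by (simp add: sum_negf)
qed

lemma wt_insert:
  assumes "finite F" "e \<notin> F"
  shows "sg_weight w (insert e F) = w (fst e) (snd e) * sg_weight w F"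
  using assms unfolding sg_weight_def by (simp add: case_prod_beta)

definition Fs :: "nat \<Rightarrow> (nat \<Rightarrow> nat \<Rightarrow> real) \<Rightarrow> nat \<Rightarrow> (nat \<times> nat) set set" where
  "Fs n w k = {F. forest2 n w F \<and> card F = k}"

lemma finite_Fs: "finite (Fs n w k)"
  by (rule finite_subset[of _ "Pow (arcs n w)"]) (auto simp: Fs_def forest2_def finite_arcs)

lemma qk_eq:
  assumes "i < n"
  shows "qk n w k i j = (\<Sum>F\<in>Fs n w k. if rt F i = j then sg_weight w F else 0)"
proof -
  have "{F. in_forest n w F \<and> card F = k \<and> in_tree_rooted_at n F i j} = {F \<in> Fs n w k. rt F i = j}"
    using in_forest_iff in_tree_iff assms unfolding Fs_def by blast
  then show ?thesis unfolding qk_def using sum.inter_filter[OF finite_Fs] by simp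
qed

definition sigma :: "nat \<Rightarrow> (nat \<Rightarrow> nat \<Rightarrow> real) \<Rightarrow> nat \<Rightarrow> real" where
  "sigma n w k = (\<Sum>F\<in>Fs n w k. sg_weight w F)"

lemma core:
  assumes wnn: "\<And>a b. a < n \<Longrightarrow> b < n \<Longrightarrow> w a b \<ge> 0"
    and wdiag: "\<And>a. a < n \<Longrightarrow> w a a = 0"
    and i: "i < n" and j: "j < n"
  shows "qk n w (Suc k) i j + (\<Sum>m\<in>{0..<n}-{i}. w i m) * qk n w k i j
           - (\<Sum>m\<in>{0..<n}-{i}. w i m * qk n w k m j) = (if i = j then sigma n w (Suc k) else 0)"
proof -
  define V where "V = {0..<n} - {i}"
  define h where "h = (\<lambda>(F,m). w i m * sg_weight w F *
      ((if rt F i = j then 1 else 0) - (if rt F m = j then 1 else 0)) :: real)"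
  define P where "P = Fs n w k \<times> V"
  define P1 where "P1 = {(F,m) \<in> P. w i m > 0 \<and> sinkF F i \<and> rt F m \<noteq> i}"
  define P2 where "P2 = {(F,m) \<in> P. w i m > 0 \<and> \<not> sinkF F i \<and> rt F m \<noteq> rt F i}"
  define hG where "hG = (\<lambda>G. sg_weight w G * ((if i = j then 1 else 0) - (if rt G i = j then 1 else 0)) :: real)"
  define Gs where "Gs = {G \<in> Fs n w (Suc k). \<not> sinkF G i}"
  have finV: "finite V" unfolding V_def by simp
  have finP: "finite P" unfolding P_def using finite_Fs finV by simp
  have arc_iff: "(a,b) \<in> arcs n w \<longleftrightarrow> a < n \<and> b < n \<and> w a b > 0" for a b unfolding arcs_def by simp
  have fin_of: "forest2 n w F \<Longrightarrow> finite F" for F using finite_forest unfolding forest2_def by blast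
  have S1: "(\<Sum>m\<in>V. w i m) * qk n w k i j - (\<Sum>m\<in>V. w i m * qk n w k m j) = sum h P"
  proof -
    have "(\<Sum>m\<in>V. w i m) * qk n w k i j = (\<Sum>m\<in>V. \<Sum>F\<in>Fs n w k. w i m * sg_weight w F * (if rt F i = j then 1 else 0))"
      unfolding qk_eq[OF i] sum_distrib_right
      by (intro sum.cong refl) (auto simp: sum_distrib_left intro!: sum.cong)
    moreover have "(\<Sum>m\<in>V. w i m * qk n w k m j) = (\<Sum>m\<in>V. \<Sum>F\<in>Fs n w k. w i m * sg_weight w F * (if rt F m = j then 1 else 0))"
      by (intro sum.cong refl) (simp add: qk_eq V_def sum_distrib_left if_distrib cong: if_cong)
    moreover have "sum h P = (\<Sum>m\<in>V. \<Sum>F\<in>Fs n w k. h (F,m))"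
    proof -
      have "sum h P = (\<Sum>F\<in>Fs n w k. \<Sum>m\<in>V. h (F,m))"
        unfolding P_def sum.cartesian_product by (simp add: split_def)
      then show ?thesis by (simp add: sum.swap[of _ V])
    qed
    ultimately show ?thesis unfolding h_def by (simp add: sum_subtractf[symmetric] algebra_simps)
  qed
  have S2: "sum h P = sum h P1 + sum h P2"
  proof -
    have "sum h P = sum h (P1 \<union> P2)"
    proof (rule sum.mono_neutral_right[OF finP])
      show "P1 \<union> P2 \<subseteq> P" unfolding P1_def P2_def by auto
      show "\<forall>x\<in>P - (P1 \<union> P2). h x = 0"
      proof
        fix x assume x: "x \<in> P - (P1 \<union> P2)"
        obtain F m where xe: "x = (F,m)" by (cases x)
        have F: "forest2 n w F" and m: "m < n" using x xe unfolding P_def Fs_def V_def by auto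
        have "w i m \<ge> 0" using wnn i m by simp
        then consider "w i m = 0" | "w i m > 0 \<and> sinkF F i \<and> rt F m = i"
          | "w i m > 0 \<and> \<not> sinkF F i \<and> rt F m = rt F i"
          using x xe unfolding P1_def P2_def by fastforce
        then show "h x = 0"
        proof cases
          case 1 then show ?thesis unfolding h_def xe by simp
        next
          case 2
          then have "rt F i = i" using rt_sink forest2_functional[OF F] by blast
          then show ?thesis using 2 unfolding h_def xe by simp
        next
          case 3 then show ?thesis unfolding h_def xe by simp
        qed
      qed
    qed
    also have "\<dots> = sum h P1 + sum h P2"
      by (rule sum.union_disjoint) (use finP in \<open>auto simp: P1_def P2_def intro: finite_subset\<close>)
    finally show ?thesis .
  qed
  define g where "g = (\<lambda>(F,m). (insert (i,m) (F - {(i, par F i)}), par F i))"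
  have invol: "g x \<in> P2 \<and> g (g x) = x \<and> h (g x) = - h x" if x: "x \<in> P2" for x
  proof -
    obtain F m where xe: "x = (F,m)" by (cases x)
    have F: "forest2 n w F" and cF: "card F = k" and m: "m < n" "m \<noteq> i" and wm: "w i m > 0"
      and ns: "\<not> sinkF F i" and rne: "rt F m \<noteq> rt F i"
      using x xe unfolding P2_def P_def Fs_def V_def by auto
    have func: "functionalF F" using F forest2_functional by blast
    define m' where "m' = par F i"
    have im': "(i,m') \<in> F" using par_in[OF func ns] unfolding m'_def .
    define F0 where "F0 = F - {(i,m')}"
    have R: "forest2 n w F0" "sinkF F0 i" "rt F0 m' \<noteq> i"
      using remove_arc[OF F im'] unfolding F0_def by auto
    have arc': "(i,m') \<in> arcs n w" using F im' unfolding forest2_def by auto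
    have FF: "F = insert (i,m') F0" using im' unfolding F0_def by auto
    have A0: "rt F i = rt F0 m'" "\<forall>u. rt F0 u \<noteq> i \<longrightarrow> rt F u = rt F0 u"
      "\<forall>u. rt F0 u = i \<longrightarrow> rt F u = rt F0 m'"
      using add_arc[OF R(1) R(2) arc' R(3)] FF by auto
    have r0m: "rt F0 m \<noteq> i" using A0 rne by metis
    have rFm: "rt F m = rt F0 m" using A0 r0m by blast
    have arc: "(i,m) \<in> arcs n w" using arc_iff i m wm by simp
    define F' where "F' = insert (i,m) F0"
    have A1: "forest2 n w F'" "rt F' i = rt F0 m" "\<forall>u. rt F0 u \<noteq> i \<longrightarrow> rt F' u = rt F0 u"
      using add_arc[OF R(1) R(2) arc r0m] unfolding F'_def by auto
    have gx: "g x = (F', m')" unfolding g_def xe F'_def F0_def m'_def by simp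
    have finF0: "finite F0" using fin_of[OF R(1)] .
    have nin: "(i,m) \<notin> F0" "(i,m') \<notin> F0" using R(2) unfolding sinkF_def by auto
    have cF0: "card F0 = k - 1" using cF im' fin_of[OF F] unfolding F0_def by simp
    have kpos: "k > 0" using cF im' fin_of[OF F] by (cases k) auto
    have cF': "card F' = k" using cF0 finF0 nin kpos unfolding F'_def by simp
    have m'V: "m' < n" "w i m' > 0" using arc' arc_iff by auto
    have m'i: "m' \<noteq> i" using m'V(2) wdiag[OF i] by auto
    have ns': "\<not> sinkF F' i" unfolding F'_def sinkF_def by auto
    have rF'm': "rt F' m' = rt F0 m'" using A1(3) R(3) by blast
    have "rt F' m' \<noteq> rt F' i" using rF'm' A1(2) A0(1) rFm rne by simp
    then have g1: "g x \<in> P2" unfolding gx P2_def P_def Fs_def V_def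
      using A1(1) cF' m'V m'i ns' by auto
    have parF': "par F' i = m" using par_eq[OF forest2_functional[OF A1(1)]] unfolding F'_def by simp
    have "F' - {(i,m)} = F0" unfolding F'_def using nin by auto
    moreover have "g (F',m') = (insert (i,m') (F' - {(i, par F' i)}), par F' i)" unfolding g_def by simp
    ultimately have "g (F',m') = x" unfolding xe using parF' FF[symmetric] by simp
    then have g2: "g (g x) = x" using gx by simp
    have wF: "sg_weight w F = w i m' * sg_weight w F0" using wt_insert[OF finF0 nin(2)] FF by simp
    have wF': "sg_weight w F' = w i m * sg_weight w F0" using wt_insert[OF finF0 nin(1)] unfolding F'_def by simp
    have "h (F',m') = - h (F,m)" unfolding h_def using wF wF' rF'm' A1(2) A0(1) rFm
      by (simp add: algebra_simps)
    then have g3: "h (g x) = - h x" using gx xe by simp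
    show ?thesis using g1 g2 g3 by blast
  qed
  have S3: "sum h P2 = 0" by (rule sum_invol_zero[of P2 g]) (use invol in auto)
  have S4: "sum h P1 = sum hG Gs"
  proof (rule sum.reindex_bij_witness[of P1 "\<lambda>G. (G - {(i, par G i)}, par G i)" "\<lambda>(F,m). insert (i,m) F"])
    fix a assume a: "a \<in> P1"
    obtain F m where xe: "a = (F,m)" by (cases a)
    have F: "forest2 n w F" and cF: "card F = k" and m: "m < n" "m \<noteq> i" and wm: "w i m > 0"
      and si: "sinkF F i" and rne: "rt F m \<noteq> i"
      using a xe unfolding P1_def P_def Fs_def V_def by auto
    have arc: "(i,m) \<in> arcs n w" using arc_iff i m wm by simp
    have A: "forest2 n w (insert (i,m) F)" "rt (insert (i,m) F) i = rt F m"
      using add_arc[OF F si arc rne] by auto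
    have nin: "(i,m) \<notin> F" using si unfolding sinkF_def by auto
    have par: "par (insert (i,m) F) i = m" using par_eq[OF forest2_functional[OF A(1)]] by simp
    show "(\<lambda>G. (G - {(i, par G i)}, par G i)) ((\<lambda>(F,m). insert (i,m) F) a) = a"
      using par nin xe by auto
    show "(\<lambda>(F,m). insert (i,m) F) a \<in> Gs"
      using A(1) cF fin_of[OF F] nin unfolding Gs_def Fs_def xe sinkF_def by auto
    have "rt F i = i" using rt_sink[OF forest2_functional[OF F] si] .
    then show "hG ((\<lambda>(F,m). insert (i,m) F) a) = h a"
      unfolding hG_def h_def xe using wt_insert[OF fin_of[OF F] nin] A(2) by (auto simp: algebra_simps)
  next
    fix b assume b: "b \<in> Gs"
    have G: "forest2 n w b" and cG: "card b = Suc k" and ns: "\<not> sinkF b i"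
      using b unfolding Gs_def Fs_def by auto
    define m where "m = par b i"
    have im: "(i,m) \<in> b" using par_in[OF forest2_functional[OF G] ns] unfolding m_def .
    have R: "forest2 n w (b - {(i,m)})" "sinkF (b - {(i,m)}) i" "rt (b - {(i,m)}) m \<noteq> i"
      using remove_arc[OF G im] by auto
    have arc: "(i,m) \<in> arcs n w" using G im unfolding forest2_def by auto
    have mm: "m < n" "w i m > 0" using arc arc_iff by auto
    have "m \<noteq> i" using mm wdiag[OF i] by auto
    moreover have "card (b - {(i,m)}) = k" using cG im fin_of[OF G] by simp
    ultimately show "(b - {(i, par b i)}, par b i) \<in> P1"
      using R mm unfolding P1_def P_def Fs_def V_def m_def[symmetric] by auto
    show "(\<lambda>(F,m). insert (i,m) F) ((\<lambda>G. (G - {(i, par G i)}, par G i)) b) = b"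
      using im unfolding m_def by auto
  qed
  have S5: "sum hG Gs = (if i = j then sigma n w (Suc k) else 0) - qk n w (Suc k) i j"
  proof -
    have "sum hG Gs = sum hG (Fs n w (Suc k))"
    proof (rule sum.mono_neutral_left[OF finite_Fs])
      show "Gs \<subseteq> Fs n w (Suc k)" unfolding Gs_def by auto
      show "\<forall>G\<in>Fs n w (Suc k) - Gs. hG G = 0"
      proof
        fix G assume "G \<in> Fs n w (Suc k) - Gs"
        then have "forest2 n w G" "sinkF G i" unfolding Gs_def Fs_def by auto
        then have "rt G i = i" using rt_sink forest2_functional by blast
        then show "hG G = 0" unfolding hG_def by simp
      qed
    qed
    also have "\<dots> = (if i = j then sigma n w (Suc k) else 0) - qk n w (Suc k) i j"
      unfolding hG_def qk_eq[OF i] sigma_def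
      by (cases "i = j") (simp_all add: sum_subtractf[symmetric] sum_negf[symmetric] right_diff_distrib cong: sum.cong,
          auto intro!: sum.cong)
    finally show ?thesis .
  qed
  show ?thesis using S1 S2 S3 S4 S5 unfolding V_def by simp
qed



lemma forest2_empty: "forest2 n w {}"
  unfolding forest2_def functionalF_def sinkF_def by auto

lemma Fs0: "Fs n w 0 = {{}}"
proof -
  have "F = {}" if "forest2 n w F" "card F = 0" for F
    using that finite_forest[of F n w] unfolding forest2_def by auto
  then show ?thesis unfolding Fs_def using forest2_empty by auto
qed

lemma q0: "i < n \<Longrightarrow> qk n w 0 i j = (if i = j then 1 else 0)"
  unfolding qk_eq Fs0 using rt_sink[of "{}" i] by (simp add: sg_weight_def functionalF_def sinkF_def)

lemma qbig: "i < n \<Longrightarrow> qk n w (Suc n) i j = 0"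
proof -
  assume i: "i < n"
  have "Fs n w (Suc n) = {}" unfolding Fs_def using card_forest by fastforce
  then show ?thesis unfolding qk_eq[OF i] by simp
qed

lemma entry_id:
  fixes \<tau> :: complex
  assumes wnn: "\<And>a b. a < n \<Longrightarrow> b < n \<Longrightarrow> w a b \<ge> 0"
    and wdiag: "\<And>a. a < n \<Longrightarrow> w a a = 0"
    and i: "i < n" and j: "j < n"
  shows "Q_tau n w \<tau> $$ (i,j) + \<tau> * (\<Sum>m\<in>{0..<n}. laplacian n w $$ (i,m) * Q_tau n w \<tau> $$ (m,j))
    = (if i = j then 1 + (\<Sum>k\<le>n. complex_of_real (sigma n w (Suc k)) * \<tau> ^ Suc k) else 0)"
proof -
  define V where "V = {0..<n} - {i}"
  define d where "d = (\<Sum>m\<in>V. w i m)"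
  have Qe: "Q_tau n w \<tau> $$ (m,j) = (\<Sum>k\<le>n. complex_of_real (qk n w k m j) * \<tau> ^ k)" if "m < n" for m
    unfolding Q_tau_def using that j by simp
  have "(\<Sum>m\<in>{0..<n}. laplacian n w $$ (i,m) * Q_tau n w \<tau> $$ (m,j))
      = laplacian n w $$ (i,i) * Q_tau n w \<tau> $$ (i,j) + (\<Sum>m\<in>V. laplacian n w $$ (i,m) * Q_tau n w \<tau> $$ (m,j))"
    unfolding V_def using i by (subst sum.remove[of _ i]) auto
  also have "\<dots> = complex_of_real d * Q_tau n w \<tau> $$ (i,j) - (\<Sum>m\<in>V. complex_of_real (w i m) * Q_tau n w \<tau> $$ (m,j))"
    unfolding laplacian_def d_def V_def using i by (simp add: sum_negf[symmetric])
  also have "\<dots> = (\<Sum>k\<le>n. \<tau> ^ k * complex_of_real (d * qk n w k i j - (\<Sum>m\<in>V. w i m * qk n w k m j)))"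
  proof -
    have "(\<Sum>m\<in>V. complex_of_real (w i m) * Q_tau n w \<tau> $$ (m,j))
        = (\<Sum>m\<in>V. \<Sum>k\<le>n. \<tau> ^ k * complex_of_real (w i m * qk n w k m j))"
      by (intro sum.cong refl) (auto simp: V_def Qe sum_distrib_left mult_ac)
    also have "\<dots> = (\<Sum>k\<le>n. \<tau> ^ k * complex_of_real (\<Sum>m\<in>V. w i m * qk n w k m j))"
      by (subst sum.swap) (simp add: sum_distrib_left)
    finally have 1: "(\<Sum>m\<in>V. complex_of_real (w i m) * Q_tau n w \<tau> $$ (m,j))
        = (\<Sum>k\<le>n. \<tau> ^ k * complex_of_real (\<Sum>m\<in>V. w i m * qk n w k m j))" .
    have 2: "complex_of_real d * Q_tau n w \<tau> $$ (i,j) = (\<Sum>k\<le>n. \<tau> ^ k * complex_of_real (d * qk n w k i j))"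
      using Qe[OF i] by (simp add: sum_distrib_left mult_ac)
    show ?thesis unfolding 1 2 by (simp add: sum_subtractf[symmetric] right_diff_distrib)
  qed
  also have "\<dots> = (\<Sum>k\<le>n. \<tau> ^ k * complex_of_real ((if i = j then sigma n w (Suc k) else 0) - qk n w (Suc k) i j))"
  proof -
    have "d * qk n w k i j - (\<Sum>m\<in>V. w i m * qk n w k m j) = (if i = j then sigma n w (Suc k) else 0) - qk n w (Suc k) i j" for k
      using core[where n=n and w=w and i=i and j=j and k=k, OF wnn wdiag i j] unfolding d_def V_def by linarith
    then show ?thesis by simp
  qed
  finally have LQ: "(\<Sum>m\<in>{0..<n}. laplacian n w $$ (i,m) * Q_tau n w \<tau> $$ (m,j)) = \<dots>" .
  define f where "f k = complex_of_real (qk n w k i j) * \<tau> ^ k" for k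
  have "Q_tau n w \<tau> $$ (i,j) + \<tau> * (\<Sum>k\<le>n. \<tau> ^ k * complex_of_real ((if i = j then sigma n w (Suc k) else 0) - qk n w (Suc k) i j))
     = (\<Sum>k\<le>n. f k - f (Suc k)) + (if i = j then (\<Sum>k\<le>n. complex_of_real (sigma n w (Suc k)) * \<tau> ^ Suc k) else 0)"
    unfolding Qe[OF i] f_def
    by (simp add: sum_distrib_left sum_subtractf sum.distrib algebra_simps)
  also have "\<dots> = (if i = j then 1 + (\<Sum>k\<le>n. complex_of_real (sigma n w (Suc k)) * \<tau> ^ Suc k) else 0)"
    using sum_telescope[of f n] q0[OF i] qbig[OF i] unfolding f_def by simp
  finally show ?thesis unfolding LQ .
qed


theorem proposition13:
  fixes n :: nat and w :: "nat \<Rightarrow> nat \<Rightarrow> real" and lam :: complex and j :: nat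
  assumes "n > 1"
    and "\<And>i k. i < n \<Longrightarrow> k < n \<Longrightarrow> w i k \<ge> 0"
    and "\<And>i. i < n \<Longrightarrow> w i i = 0"
    and "eigenvalue (laplacian n w) lam"
    and "lam \<noteq> 0"
    and "j < n"
    and "col (Q_tau n w (- inverse lam)) j \<noteq> 0\<^sub>v n"
  shows "eigenvector (laplacian n w) (col (Q_tau n w (- inverse lam)) j) lam"
proof -
  define \<tau> where "\<tau> = - inverse lam"
  define L where "L = laplacian n w"
  define Q where "Q = Q_tau n w \<tau>"
  define s where "s = 1 + (\<Sum>k\<le>n. complex_of_real (sigma n w (Suc k)) * \<tau> ^ Suc k)"
  have Lc: "L \<in> carrier_mat n n" unfolding L_def laplacian_def by simp
  have Qc: "Q \<in> carrier_mat n n" unfolding Q_def Q_tau_def by simp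
  have E: "Q $$ (a,b) + \<tau> * (\<Sum>m\<in>{0..<n}. L $$ (a,m) * Q $$ (m,b)) = (if a = b then s else 0)"
    if "a < n" "b < n" for a b
    unfolding Q_def L_def s_def by (rule entry_id[OF assms(2) assms(3) that])
  have tl: "\<tau> * lam = -1" unfolding \<tau>_def using assms(5) by simp
  have s0: "s = 0"
  proof (rule ccontr)
    assume sn: "s \<noteq> 0"
    define M where "M = mat n n (\<lambda>(a,b). (if a = b then 1 else 0) + \<tau> * L $$ (a,b))"
    have Mc: "M \<in> carrier_mat n n" unfolding M_def by simp
    have Mrow: "row M a \<bullet> v = v $ a + \<tau> * (\<Sum>m\<in>{0..<n}. L $$ (a,m) * v $ m)"
      if "a < n" "v \<in> carrier_vec n" for a v
    proof -
      have "row M a \<bullet> v = (\<Sum>m\<in>{0..<n}. ((if a = m then 1 else 0) + \<tau> * L $$ (a,m)) * v $ m)"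
        unfolding scalar_prod_def using that Mc by (intro sum.cong) (auto simp: M_def)
      also have "\<dots> = (\<Sum>m\<in>{0..<n}. (if a = m then v $ m else 0) + \<tau> * (L $$ (a,m) * v $ m))"
        by (intro sum.cong) (auto simp: algebra_simps)
      also have "\<dots> = (\<Sum>m\<in>{0..<n}. (if a = m then v $ m else 0)) + \<tau> * (\<Sum>m\<in>{0..<n}. L $$ (a,m) * v $ m)"
        unfolding sum.distrib sum_distrib_left ..
      also have "\<dots> = v $ a + \<tau> * (\<Sum>m\<in>{0..<n}. L $$ (a,m) * v $ m)"
        using that(1) by simp
      finally show ?thesis .
    qed
    have MQ: "M * Q = s \<cdot>\<^sub>m 1\<^sub>m n"
    proof (rule eq_matI)
      fix a b assume ab: "a < dim_row (s \<cdot>\<^sub>m 1\<^sub>m n)" "b < dim_col (s \<cdot>\<^sub>m 1\<^sub>m n)"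
      then have a: "a < n" and b: "b < n" by auto
      have "(M * Q) $$ (a,b) = row M a \<bullet> col Q b" using Mc Qc a b by simp
      also have "\<dots> = col Q b $ a + \<tau> * (\<Sum>m\<in>{0..<n}. L $$ (a,m) * col Q b $ m)"
        using Mrow[OF a, of "col Q b"] Qc by (simp add: carrier_vecI)
      also have "\<dots> = Q $$ (a,b) + \<tau> * (\<Sum>m\<in>{0..<n}. L $$ (a,m) * Q $$ (m,b))"
        using Qc a b by simp
      also have "\<dots> = (s \<cdot>\<^sub>m 1\<^sub>m n) $$ (a,b)" using E[OF a b] a b by simp
      finally show "(M * Q) $$ (a,b) = (s \<cdot>\<^sub>m 1\<^sub>m n) $$ (a,b)" .
    qed (use Mc Qc in auto)
    have "det M * det Q = s ^ n"
      using det_mult[OF Mc Qc] MQ by simp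
    then have dM: "det M \<noteq> 0" using sn by auto
    obtain v where v: "eigenvector L v lam" using assms(4) unfolding eigenvalue_def L_def by blast
    have vc: "v \<in> carrier_vec n" and vn: "v \<noteq> 0\<^sub>v n" and Lv: "L *\<^sub>v v = lam \<cdot>\<^sub>v v"
      using v Lc unfolding eigenvector_def by auto
    have "M *\<^sub>v v = 0\<^sub>v n"
    proof (rule eq_vecI)
      fix a assume "a < dim_vec (0\<^sub>v n :: complex vec)"
      then have a: "a < n" by simp
      have "(\<Sum>m\<in>{0..<n}. L $$ (a,m) * v $ m) = (L *\<^sub>v v) $ a"
        using Lc vc a by (auto simp: scalar_prod_def intro!: sum.cong)
      also have "\<dots> = lam * v $ a" using Lv a vc by simp
      finally have "(M *\<^sub>v v) $ a = v $ a + \<tau> * (lam * v $ a)" using Mrow[OF a vc] Mc a by simp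
      also have "\<dots> = 0" using tl by (simp add: mult.assoc[symmetric])
      finally show "(M *\<^sub>v v) $ a = 0\<^sub>v n $ a" using a by simp
    qed (use Mc in auto)
    then have "det M = 0" using det_0_iff_vec_prod_zero[OF Mc] vc vn by blast
    then show False using dM by simp
  qed
  have "L *\<^sub>v col Q j = lam \<cdot>\<^sub>v col Q j"
  proof (rule eq_vecI)
    fix a assume "a < dim_vec (lam \<cdot>\<^sub>v col Q j)"
    then have a: "a < n" using Qc by simp
    have "(L *\<^sub>v col Q j) $ a = (\<Sum>m\<in>{0..<n}. L $$ (a,m) * Q $$ (m,j))"
      using Lc Qc a assms(6) by (auto simp: scalar_prod_def intro!: sum.cong)
    moreover have "Q $$ (a,j) + \<tau> * (\<Sum>m\<in>{0..<n}. L $$ (a,m) * Q $$ (m,j)) = 0"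
      using E[OF a assms(6)] s0 by simp
    ultimately have "Q $$ (a,j) + \<tau> * (L *\<^sub>v col Q j) $ a = 0" by simp
    then have "lam * Q $$ (a,j) + (\<tau> * lam) * (L *\<^sub>v col Q j) $ a = 0"
      by (metis mult.assoc mult.commute distrib_left mult_zero_right)
    then have "(L *\<^sub>v col Q j) $ a = lam * Q $$ (a,j)" using tl by simp
    then show "(L *\<^sub>v col Q j) $ a = (lam \<cdot>\<^sub>v col Q j) $ a" using Qc a assms(6) by simp
  qed (use Lc Qc in auto)
  then show ?thesis
    using assms(7) Lc Qc unfolding eigenvector_def L_def[symmetric] Q_def[symmetric] \<tau>_def[symmetric]
    by auto
qed


end
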